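(* For each fixed integer $r \geq 1$, $$AW(k;r) \leq \frac{k^{2r-1}}{(2r-1)!}\,(1+o(1)) \quad \text{as } k\to\infty .$$
   Context: A sequence of positive integers $w_1<w_2<\dots<w_n$ is an ascending wave if $w_{i+1}-w_i \geq w_i-w_{i-1}$ for $2\le i\le n-1$. For positive integers $k,r$, $AW(k;r)$ denotes the least positive integer $N$ such that every $r$-coloring of $\{1,2,\dots,N\}$ contains a $k$-term monochromatic ascending wave. *)

theory Defs
  imports Complex_Main
begin

definition ascending_wave :: "(nat \<Rightarrow> nat) \<Rightarrow> nat \<Rightarrow> bool" where
  "ascending_wave w k \<longleftrightarrow>
     (\<forall>i\<in>{1..k}. 0 < w i) \<and>
     (\<forall>i. 1 \<le> i \<and> i < k \<longrightarrow> w i < w (i+1)) \<and>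
     (\<forall>i. 2 \<le> i \<and> i \<le> k - 1 \<longrightarrow> int (w (i+1)) - int (w i) \<ge> int (w i) - int (w (i-1)))"

definition has_mono_wave :: "(nat \<Rightarrow> nat) \<Rightarrow> nat \<Rightarrow> nat \<Rightarrow> bool" where
  "has_mono_wave c N k \<longleftrightarrow>
     (\<exists>w. ascending_wave w k \<and> (\<forall>i\<in>{1..k}. w i \<in> {1..N}) \<and>
          (\<forall>i\<in>{1..k}. c (w i) = c (w 1)))"

definition AW :: "nat \<Rightarrow> nat \<Rightarrow> nat" where
  "AW k r = (LEAST N. 0 < N \<and>
      (\<forall>c :: nat \<Rightarrow> nat. (\<forall>x\<in>{1..N}. c x < r) \<longrightarrow> has_mono_wave c N k))"

end

theory Submission
  imports Defs
begin

definition mw :: "(nat \<Rightarrow> nat) \<Rightarrow> nat set \<Rightarrow> nat \<Rightarrow> bool" where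
  "mw c A k \<longleftrightarrow> (\<exists>w. ascending_wave w k \<and> (\<forall>i\<in>{1..k}. w i \<in> A) \<and>
          (\<forall>i\<in>{1..k}. c (w i) = c (w 1)))"

definition bnd :: "nat \<Rightarrow> nat \<Rightarrow> nat" where
  "bnd p k = (k + 2*p) choose (2*p+1)"

definition Dd :: "nat \<Rightarrow> nat \<Rightarrow> nat" where
  "Dd p m = (m + 2*p + 1) choose (2*p+2)"

lemma L1: "Dd p m + bnd p (Suc m) = Dd p (Suc m)"
proof -
  have "Dd p (Suc m) = Suc (m + 2*p + 1) choose Suc (2*p+1)"
    unfolding Dd_def by (simp add: numeral_2_eq_2)
  also have "\<dots> = ((m + 2*p + 1) choose (2*p+1)) + ((m + 2*p + 1) choose Suc (2*p+1))"
    by (rule binomial_Suc_Suc)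
  finally show ?thesis unfolding Dd_def bnd_def by (simp add: numeral_2_eq_2)
qed

lemma L2: "bnd (Suc p) m + Dd p (Suc m) = bnd (Suc p) (Suc m)"
proof -
  have "bnd (Suc p) (Suc m) = Suc (m + 2*p + 2) choose Suc (2*p+2)"
    unfolding bnd_def by (simp add: numeral_2_eq_2)
  also have "\<dots> = ((m + 2*p + 2) choose (2*p+2)) + ((m + 2*p + 2) choose Suc (2*p+2))"
    by (rule binomial_Suc_Suc)
  finally show ?thesis unfolding Dd_def bnd_def by (simp add: numeral_2_eq_2)
qed

lemma L3: "m \<ge> 1 \<Longrightarrow> Dd p m \<ge> 1"
  unfolding Dd_def by (simp add: Suc_le_eq)

lemma Dd1: "Dd p 1 = 1" unfolding Dd_def by simp
lemma bnd1: "bnd p 1 = 1" "bnd p (Suc 0) = 1" unfolding bnd_def by simp_all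
lemma bnd0: "bnd 0 k = k" unfolding bnd_def by simp

lemma wave0: "ascending_wave w 0"
  unfolding ascending_wave_def by auto

lemma wave1: "w 1 > 0 \<Longrightarrow> ascending_wave w 1"
  unfolding ascending_wave_def by auto

lemma wave_extend:
  assumes "ascending_wave w m" "m \<ge> 1" "w m < y"
    "m \<ge> 2 \<Longrightarrow> w m - w (m-1) \<le> y - w m"
  shows "ascending_wave (w(Suc m := y)) (Suc m)"
proof -
  have A: "\<forall>i\<in>{1..m}. 0 < w i" "\<forall>i. 1 \<le> i \<and> i < m \<longrightarrow> w i < w (i+1)"
    "\<forall>i. 2 \<le> i \<and> i \<le> m - 1 \<longrightarrow> int (w (i+1)) - int (w i) \<ge> int (w i) - int (w (i-1))"
    using assms(1) unfolding ascending_wave_def by auto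
  let ?w = "w(Suc m := y)"
  have P: "\<forall>i\<in>{1..Suc m}. 0 < ?w i"
    using A(1) assms(3) by (auto simp: le_Suc_eq)
  have Q: "\<forall>i. 1 \<le> i \<and> i < Suc m \<longrightarrow> ?w i < ?w (i+1)"
  proof (intro allI impI)
    fix i assume i: "1 \<le> i \<and> i < Suc m"
    show "?w i < ?w (i+1)"
    proof (cases "i = m")
      case True then show ?thesis using assms(3) by simp
    next
      case False then show ?thesis using A(2) i by auto
    qed
  qed
  have R: "\<forall>i. 2 \<le> i \<and> i \<le> Suc m - 1 \<longrightarrow> int (?w (i+1)) - int (?w i) \<ge> int (?w i) - int (?w (i-1))"
  proof (intro allI impI)
    fix i assume i: "2 \<le> i \<and> i \<le> Suc m - 1"
    show "int (?w (i+1)) - int (?w i) \<ge> int (?w i) - int (?w (i-1))"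
    proof (cases "i = m")
      case True
      have "w (m-1) < w (m-1+1)" using A(2) i True by (intro A(2)[rule_format]) auto
      then have "w (m-1) < w m" using i True by simp
      then show ?thesis using True assms(3,4) i by auto
    next
      case False then show ?thesis using A(3) i by auto
    qed
  qed
  show ?thesis unfolding ascending_wave_def using P Q R by blast
qed

lemma base_case:
  assumes "t \<ge> 1" "\<forall>x\<in>{t..<t+k}. c x < (1::nat)"
  shows "mw c {t..<t+k} k"
proof -
  let ?w = "\<lambda>i. t + i - 1"
  have "ascending_wave ?w k"
    unfolding ascending_wave_def using assms(1) by auto
  moreover have "\<forall>i\<in>{1..k}. ?w i \<in> {t..<t+k}" using assms(1) by auto
  moreover have "\<forall>i\<in>{1..k}. c (?w i) = c (?w 1)"
  proof
    fix i assume i: "i \<in> {1..k}"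
    have "?w i \<in> {t..<t+k}" using i assms(1) by auto
    then have "c (?w i) = 0" using assms(2) by auto
    moreover have "?w 1 \<in> {t..<t+k}" using i assms(1) by auto
    then have "c (?w 1) = 0" using assms(2) by auto
    ultimately show "c (?w i) = c (?w 1)" by simp
  qed
  ultimately show ?thesis unfolding mw_def by blast
qed

lemma recolour:
  fixes c :: "nat \<Rightarrow> nat"
  assumes "\<forall>x\<in>I. c x < Suc n" "\<forall>x\<in>I. c x \<noteq> j" "j < Suc n"
  defines "c' \<equiv> (\<lambda>x. if c x < j then c x else c x - 1)"
  shows "\<forall>x\<in>I. c' x < n" "\<And>x y. x \<in> I \<Longrightarrow> y \<in> I \<Longrightarrow> c' x = c' y \<Longrightarrow> c x = c y"
proof -
  show "\<forall>x\<in>I. c' x < n"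
  proof
    fix x assume x: "x \<in> I"
    then have "c x < Suc n" "c x \<noteq> j" using assms by auto
    then show "c' x < n" unfolding c'_def using assms(3) by auto
  qed
  fix x y assume xy: "x \<in> I" "y \<in> I" "c' x = c' y"
  then have "c x \<noteq> j" "c y \<noteq> j" using assms by auto
  then show "c x = c y" using xy(3) unfolding c'_def by (auto split: if_splits)
qed

lemma step_process:
  fixes p :: nat and c :: "nat \<Rightarrow> nat"
  assumes IH: "\<And>k t c. t \<ge> 1 \<Longrightarrow> (\<forall>x\<in>{t..<t+bnd p k}. c x < Suc p) \<Longrightarrow> mw c {t..<t+bnd p k} k"
    and s: "s \<ge> 1"
  shows "1 \<le> m \<Longrightarrow> (\<forall>x\<in>{s..<s+bnd (Suc p) m}. c x < Suc (Suc p)) \<Longrightarrow>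
    \<exists>w. ascending_wave w m \<and> (\<forall>i\<in>{1..m}. s \<le> w i \<and> w i < s + bnd (Suc p) m) \<and>
      (\<forall>i\<in>{1..m}. c (w i) = c (w 1)) \<and> (2 \<le> m \<longrightarrow> w m - w (m-1) \<le> Dd p m)"
proof (induction m)
  case 0
  then show ?case by simp
next
  case (Suc m)
  show ?case
  proof (cases "m = 0")
    case True
    let ?w = "\<lambda>i::nat. s"
    have "ascending_wave ?w 1" using s by (intro wave1) auto
    moreover have "\<forall>i\<in>{1..1}. s \<le> ?w i \<and> ?w i < s + bnd (Suc p) 1" by (simp add: bnd1)
    ultimately show ?thesis using True by (auto simp: bnd1)
  next
    case False
    then have m1: "m \<ge> 1" by simp
    have Zle: "bnd (Suc p) m + Dd p (Suc m) = bnd (Suc p) (Suc m)" by (rule L2)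
    have col: "\<forall>x\<in>{s..<s+bnd (Suc p) (Suc m)}. c x < Suc (Suc p)" using Suc.prems by simp
    have "\<forall>x\<in>{s..<s+bnd (Suc p) m}. c x < Suc (Suc p)" using col Zle by auto
    with Suc.IH m1 obtain w where w: "ascending_wave w m"
      "\<forall>i\<in>{1..m}. s \<le> w i \<and> w i < s + bnd (Suc p) m"
      "\<forall>i\<in>{1..m}. c (w i) = c (w 1)" "2 \<le> m \<longrightarrow> w m - w (m-1) \<le> Dd p m"
      by blast
    define j where "j = c (w 1)"
    define d where "d = (if m = 1 then 1 else w m - w (m-1))"
    define t where "t = w m + d"
    define W where "W = bnd p (Suc m)"
    have DW: "Dd p m + W = Dd p (Suc m)" unfolding W_def by (rule L1)
    have Dm: "Dd p m \<ge> 1" using m1 by (rule L3)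
    have wm: "s \<le> w m" "w m < s + bnd (Suc p) m" using w(2) m1 by auto
    have jr: "j < Suc (Suc p)" unfolding j_def using col w(2) m1 Zle by fastforce
    have dpos: "d \<ge> 1"
    proof (cases "m = 1")
      case True then show ?thesis unfolding d_def by simp
    next
      case False
      have A2: "\<forall>i. 1 \<le> i \<and> i < m \<longrightarrow> w i < w (i+1)" using w(1) unfolding ascending_wave_def by blast
      have "w (m-1) < w (m-1+1)" using False m1 by (intro A2[rule_format]) auto
      then show ?thesis using False m1 unfolding d_def by simp
    qed
    have dle: "d \<le> Dd p m"
    proof (cases "m = 1")
      case True then show ?thesis unfolding d_def using Dm by simp
    next
      case False then show ?thesis unfolding d_def using w(4) m1 by simp
    qed
    have Isub: "\<forall>x\<in>{t..<t+W}. s \<le> x \<and> x < s + bnd (Suc p) (Suc m)"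
      using wm dle DW Zle dpos unfolding t_def by auto
    show ?thesis
    proof (cases "\<exists>y\<in>{t..<t+W}. c y = j")
      case True
      then obtain y where y: "y \<in> {t..<t+W}" "c y = j" by blast
      let ?w = "w(Suc m := y)"
      have ext: "ascending_wave ?w (Suc m)"
      proof (rule wave_extend[OF w(1) m1])
        show "w m < y" using y dpos unfolding t_def by auto
        assume "m \<ge> 2"
        then show "w m - w (m-1) \<le> y - w m" using y unfolding t_def d_def by auto
      qed
      have b: "\<forall>i\<in>{1..Suc m}. s \<le> ?w i \<and> ?w i < s + bnd (Suc p) (Suc m)"
      proof
        fix i assume i: "i \<in> {1..Suc m}"
        show "s \<le> ?w i \<and> ?w i < s + bnd (Suc p) (Suc m)"
        proof (cases "i = Suc m")
          case True then show ?thesis using Isub y by simp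
        next
          case False
          then have "i \<in> {1..m}" using i by auto
          then have "s \<le> w i \<and> w i < s + bnd (Suc p) m" using w(2) by blast
          then show ?thesis using False Zle by simp
        qed
      qed
      have mono: "\<forall>i\<in>{1..Suc m}. c (?w i) = c (?w 1)"
      proof
        fix i assume i: "i \<in> {1..Suc m}"
        have w1: "?w 1 = w 1" using m1 by simp
        show "c (?w i) = c (?w 1)"
        proof (cases "i = Suc m")
          case True then show ?thesis using y(2) w1 unfolding j_def by simp
        next
          case False
          then have "i \<in> {1..m}" using i by auto
          then have "c (w i) = c (w 1)" using w(3) by blast
          then show ?thesis using False w1 by simp
        qed
      qed
      have e1: "?w (Suc m) = y" "?w (Suc m - 1) = w m" by simp_all
      have "y - w m \<le> Dd p (Suc m)" using y(1) dle DW unfolding t_def atLeastLessThan_iff by arith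
      then have "?w (Suc m) - ?w (Suc m - 1) \<le> Dd p (Suc m)" by (simp only: e1)
      then show ?thesis using ext b mono by blast
    next
      case False
      then have nj: "\<forall>x\<in>{t..<t+W}. c x \<noteq> j" by blast
      have colI: "\<forall>x\<in>{t..<t+W}. c x < Suc (Suc p)"
      proof
        fix x assume "x \<in> {t..<t+W}"
        then have "x \<in> {s..<s+bnd (Suc p) (Suc m)}" using Isub by simp
        then show "c x < Suc (Suc p)" using col by blast
      qed
      define c' where "c' = (\<lambda>x. if c x < j then c x else c x - 1)"
      have c'1: "\<forall>x\<in>{t..<t+W}. c' x < Suc p"
        using recolour(1)[OF colI nj jr] by (simp only: c'_def)
      have c'2: "\<And>x y. x \<in> {t..<t+W} \<Longrightarrow> y \<in> {t..<t+W} \<Longrightarrow> c' x = c' y \<Longrightarrow> c x = c y"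
        using recolour(2)[OF colI nj jr] by (simp only: c'_def)
      have t1: "t \<ge> 1" using s wm unfolding t_def by simp
      have c'1': "\<forall>x\<in>{t..<t+bnd p (Suc m)}. c' x < Suc p" using c'1 by (simp only: W_def)
      have "mw c' {t..<t+bnd p (Suc m)} (Suc m)" by (rule IH[OF t1 c'1'])
      then have "mw c' {t..<t+W} (Suc m)" by (simp only: W_def)
      then obtain v where v: "ascending_wave v (Suc m)" "\<forall>i\<in>{1..Suc m}. v i \<in> {t..<t+W}"
        "\<forall>i\<in>{1..Suc m}. c' (v i) = c' (v 1)" unfolding mw_def by blast
      have b: "\<forall>i\<in>{1..Suc m}. s \<le> v i \<and> v i < s + bnd (Suc p) (Suc m)"
      proof
        fix i assume "i \<in> {1..Suc m}"
        then have "v i \<in> {t..<t+W}" using v(2) by blast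
        then show "s \<le> v i \<and> v i < s + bnd (Suc p) (Suc m)" using Isub by blast
      qed
      have mono: "\<forall>i\<in>{1..Suc m}. c (v i) = c (v 1)"
      proof
        fix i assume i: "i \<in> {1..Suc m}"
        have i1: "1 \<in> {1..Suc m}" by simp
        have "v i \<in> {t..<t+W}" using v(2) i by blast
        moreover have "v 1 \<in> {t..<t+W}" using v(2) i1 by blast
        moreover have "c' (v i) = c' (v 1)" using v(3) i by blast
        ultimately show "c (v i) = c (v 1)" by (rule c'2)
      qed
      have "v (Suc m) \<in> {t..<t+W}" "v m \<in> {t..<t+W}" using v(2) m1 by auto
      then have "v (Suc m) - v m \<le> Dd p (Suc m)" using DW by auto
      then have "v (Suc m) - v (Suc m - 1) \<le> Dd p (Suc m)" by simp
      then show ?thesis using v(1) b mono by blast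
    qed
  qed
qed

lemma G:
  "t \<ge> 1 \<Longrightarrow> (\<forall>x\<in>{t..<t+bnd p k}. c x < Suc p) \<Longrightarrow> mw c {t..<t+bnd p k} k"
proof (induction p arbitrary: k t c)
  case 0
  then show ?case using base_case[of t k c] by (simp add: bnd0)
next
  case (Suc p)
  show ?case
  proof (cases "k = 0")
    case True
    then show ?thesis unfolding mw_def using wave0 by auto
  next
    case False
    have k1: "1 \<le> k" using False by simp
    obtain w where w: "ascending_wave w k"
      "\<forall>i\<in>{1..k}. t \<le> w i \<and> w i < t + bnd (Suc p) k"
      "\<forall>i\<in>{1..k}. c (w i) = c (w 1)"
      using step_process[of p t k c, OF Suc.IH Suc.prems(1) k1 Suc.prems(2)] by blast
    have "\<forall>i\<in>{1..k}. w i \<in> {t..<t + bnd (Suc p) k}"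
    proof
      fix i assume "i \<in> {1..k}"
      then have "t \<le> w i \<and> w i < t + bnd (Suc p) k" using w(2) by blast
      then show "w i \<in> {t..<t + bnd (Suc p) k}" by simp
    qed
    then show ?thesis unfolding mw_def using w(1,3) by blast
  qed
qed


lemma AW_le:
  assumes "k \<ge> 1"
  shows "AW k (Suc p) \<le> bnd p k"
proof -
  have pos: "0 < bnd p k" unfolding bnd_def using assms by simp
  have "\<forall>c :: nat \<Rightarrow> nat. (\<forall>x\<in>{1..bnd p k}. c x < Suc p) \<longrightarrow> has_mono_wave c (bnd p k) k"
  proof (intro allI impI)
    fix c :: "nat \<Rightarrow> nat"
    assume h: "\<forall>x\<in>{1..bnd p k}. c x < Suc p"
    have eq: "{1..<1 + bnd p k} = {1..bnd p k}" by auto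
    have "mw c {1..<1 + bnd p k} k" by (rule G) (use h eq in auto)
    then show "has_mono_wave c (bnd p k) k" unfolding mw_def has_mono_wave_def eq by blast
  qed
  then show ?thesis unfolding AW_def using pos by (intro Least_le) blast
qed

theorem theorem1:
  fixes r :: nat
  assumes "r \<ge> 1"
  shows "\<forall>\<epsilon>>0. eventually
           (\<lambda>k. real (AW k r) \<le> (1 + \<epsilon>) * (real k ^ (2*r - 1) / fact (2*r - 1)))
           sequentially"
proof (intro allI impI)
  fix \<epsilon> :: real assume e: "\<epsilon> > 0"
  obtain p where r: "r = Suc p" using assms by (cases r) auto
  define q where "q = 2*p+1"
  have q: "2*r - 1 = q" unfolding q_def r by simp
  have "(\<lambda>k. (1 + real (2*p) / real k)^q) \<longlonglongrightarrow> (1 + 0)^q"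
    by (intro tendsto_intros)
  then have lim: "(\<lambda>k. (1 + real (2*p) / real k)^q) \<longlonglongrightarrow> 1" by simp
  have ev: "eventually (\<lambda>k. (1 + real (2*p) / real k)^q < 1 + \<epsilon>) sequentially"
    using order_tendstoD(2)[OF lim] e by simp
  have ev1: "eventually (\<lambda>k. k \<ge> (1::nat)) sequentially" by (rule eventually_ge_at_top)
  show "eventually
           (\<lambda>k. real (AW k r) \<le> (1 + \<epsilon>) * (real k ^ (2*r - 1) / fact (2*r - 1)))
           sequentially"
    using ev ev1
  proof eventually_elim
    case (elim k)
    have k0: "real k > 0" using elim(2) by simp
    have "bnd p k * fact q \<le> (k + 2*p)^q" unfolding bnd_def q_def by (rule binomial_fact_pow)
    then have "real (bnd p k * fact q) \<le> real ((k + 2*p)^q)" by (rule of_nat_mono)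
    then have a: "real (bnd p k) * fact q \<le> (real k + real (2*p))^q" by simp
    have b: "(real k + real (2*p))^q = real k ^ q * (1 + real (2*p) / real k)^q"
    proof -
      have "real k + real (2*p) = real k * (1 + real (2*p) / real k)" using k0 by (simp add: field_simps)
      then show ?thesis by (simp add: power_mult_distrib)
    qed
    have c: "real k ^ q * (1 + real (2*p) / real k)^q \<le> real k ^ q * (1 + \<epsilon>)"
      using elim(1) k0 by (intro mult_left_mono) auto
    have "real (bnd p k) * fact q \<le> (1 + \<epsilon>) * real k ^ q" using a b c by (simp add: mult.commute)
    then have "real (bnd p k) \<le> (1 + \<epsilon>) * (real k ^ q / fact q)"
      by (simp add: field_simps)
    moreover have "real (AW k r) \<le> real (bnd p k)" using AW_le[OF elim(2)] r by simp
    ultimately show ?case unfolding q by linarith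
  qed
qed

end
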